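(* Let $\mathcal{W}$ be a finite full binary forest. Then every node $x$ of $\mathcal{W}$ is deleted in the pruning procedure during the $r(x)$-th iteration.
   Context: A full binary forest is a finite rooted forest in which every node has $0$ or $2$ children. An ascending path is a sequence of nodes $(x_1,\dots,x_L)$ with $x_{k+1}$ the parent of $x_k$. In a rooted forest (not necessarily full) in which every node has at most 2 children, an only-child-path is an ascending path starting at a leaf and ending at the first encountered node that has a sibling, or at a root (it has length $1$ if the starting leaf has a sibling). Pruning procedure: $\mathcal{W}_{(0)}=\mathcal{W}$; in iteration $i\ge1$, $\mathcal{W}_{(i)}$ is obtained from $\mathcal{W}_{(i-1)}$ by deleting all nodes of all only-child-paths of $\mathcal{W}_{(i-1)}$; stop when the forest is empty. The function $r$ on nodes of $\mathcal{W}$: $r(x)=1$ if $x$ is a leaf; if $x$ has children $y_1,y_2$, $r(x)=r(y_1)+1$ when $r(y_1)=r(y_2)$, and $r(x)=\max\{r(y_1),r(y_2)\}$ otherwise. *)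

theory Defs
  imports Main
begin

text \<open>A rooted forest is given by a finite node set V and a partial parent
function par (par x = None: x is a root). Subforests obtained by deleting
nodes are represented by a subset S of V with the induced parent relation.\<close>

definition forest :: "'a set \<Rightarrow> ('a \<Rightarrow> 'a option) \<Rightarrow> bool" where
  "forest V par \<longleftrightarrow> finite V \<and> (\<forall>x\<in>V. \<forall>y. par x = Some y \<longrightarrow> y \<in> V)
     \<and> wf {(x, y). x \<in> V \<and> par x = Some y}"

definition spar :: "('a \<Rightarrow> 'a option) \<Rightarrow> 'a set \<Rightarrow> 'a \<Rightarrow> 'a option" where
  "spar par S x = (case par x of None \<Rightarrow> None | Some y \<Rightarrow> if y \<in> S then Some y else None)"

definition children :: "('a \<Rightarrow> 'a option) \<Rightarrow> 'a set \<Rightarrow> 'a \<Rightarrow> 'a set" where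
  "children par S x = {y \<in> S. spar par S y = Some x}"

definition is_leaf :: "('a \<Rightarrow> 'a option) \<Rightarrow> 'a set \<Rightarrow> 'a \<Rightarrow> bool" where
  "is_leaf par S x \<longleftrightarrow> x \<in> S \<and> children par S x = {}"

definition has_sibling :: "('a \<Rightarrow> 'a option) \<Rightarrow> 'a set \<Rightarrow> 'a \<Rightarrow> bool" where
  "has_sibling par S x \<longleftrightarrow> (\<exists>y\<in>S. y \<noteq> x \<and> spar par S x \<noteq> None \<and> spar par S y = spar par S x)"

definition full_binary_forest :: "'a set \<Rightarrow> ('a \<Rightarrow> 'a option) \<Rightarrow> bool" where
  "full_binary_forest V par \<longleftrightarrow> forest V par \<and> (\<forall>x\<in>V. card (children par V x) \<in> {0, 2})"

text \<open>x lies on some only-child-path of the subforest S: the ascending path starts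
at a leaf and continues from a node to its parent as long as the node has no
sibling (and is not a root).\<close>
inductive on_ocp :: "('a \<Rightarrow> 'a option) \<Rightarrow> 'a set \<Rightarrow> 'a \<Rightarrow> bool"
  for par S where
  start: "is_leaf par S x \<Longrightarrow> on_ocp par S x"
| step: "on_ocp par S y \<Longrightarrow> \<not> has_sibling par S y \<Longrightarrow> spar par S y = Some x \<Longrightarrow> on_ocp par S x"

definition prune_step :: "('a \<Rightarrow> 'a option) \<Rightarrow> 'a set \<Rightarrow> 'a set" where
  "prune_step par S = S - {x. on_ocp par S x}"

definition pruned :: "'a set \<Rightarrow> ('a \<Rightarrow> 'a option) \<Rightarrow> nat \<Rightarrow> 'a set" where
  "pruned V par i = (prune_step par ^^ i) V"

inductive r_rel :: "'a set \<Rightarrow> ('a \<Rightarrow> 'a option) \<Rightarrow> 'a \<Rightarrow> nat \<Rightarrow> bool"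
  for V par where
  leaf: "is_leaf par V x \<Longrightarrow> r_rel V par x 1"
| node: "x \<in> V \<Longrightarrow> children par V x = {y1, y2} \<Longrightarrow> y1 \<noteq> y2 \<Longrightarrow>
         r_rel V par y1 k1 \<Longrightarrow> r_rel V par y2 k2 \<Longrightarrow>
         r_rel V par x (if k1 = k2 then k1 + 1 else max k1 k2)"

definition r :: "'a set \<Rightarrow> ('a \<Rightarrow> 'a option) \<Rightarrow> 'a \<Rightarrow> nat" where
  "r V par x = (THE k. r_rel V par x k)"

end

theory Submission
  imports Defs
begin

lemma children_sub: "children par V x \<subseteq> V"
  unfolding children_def by auto

lemma children_S: "S \<subseteq> V \<Longrightarrow> x \<in> S \<Longrightarrow> children par S x = children par V x \<inter> S"
  unfolding children_def spar_def by (auto split: option.splits)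

lemma mem_children: "y \<in> children par V x \<longleftrightarrow> y \<in> V \<and> x \<in> V \<and> par y = Some x"
  unfolding children_def spar_def by (auto split: option.splits if_splits)

lemma ocp_in: "on_ocp par S y \<Longrightarrow> y \<in> S"
  by (induction rule: on_ocp.induct) (auto simp: is_leaf_def spar_def split: option.splits if_splits)

lemma ch_cases:
  assumes "full_binary_forest V par" "x \<in> V"
  shows "children par V x = {} \<or> (\<exists>y1 y2. y1 \<noteq> y2 \<and> children par V x = {y1, y2})"
proof -
  have "card (children par V x) \<in> {0,2}" using assms unfolding full_binary_forest_def by auto
  moreover have "finite (children par V x)"
    using assms children_sub[of par V x] unfolding full_binary_forest_def forest_def
    by (meson finite_subset)
  ultimately show ?thesis by (auto simp: card_2_iff)
qed

lemma r_exists: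
  assumes fb: "full_binary_forest V par"
  shows "x \<in> V \<Longrightarrow> \<exists>k. r_rel V par x k"
proof -
  have wf: "wf {(x, y). x \<in> V \<and> par x = Some y}" using fb unfolding full_binary_forest_def forest_def by auto
  show "x \<in> V \<Longrightarrow> \<exists>k. r_rel V par x k"
  proof (induction x rule: wf_induct[OF wf])
    case (1 x)
    from ch_cases[OF fb 1(2)] show ?case
    proof
      assume "children par V x = {}"
      then show ?thesis using 1(2) by (metis r_rel.leaf is_leaf_def)
    next
      assume "\<exists>y1 y2. y1 \<noteq> y2 \<and> children par V x = {y1, y2}"
      then obtain y1 y2 where y: "y1 \<noteq> y2" "children par V x = {y1, y2}" by blast
      have "y1 \<in> children par V x" "y2 \<in> children par V x" using y by auto
      then have "y1 \<in> V" "y2 \<in> V" "par y1 = Some x" "par y2 = Some x" by (auto simp: mem_children)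
      with 1(1) obtain k1 k2 where "r_rel V par y1 k1" "r_rel V par y2 k2" by blast
      then show ?thesis using r_rel.node[OF 1(2) y(2) y(1)] by blast
    qed
  qed
qed

lemma r_unique: "r_rel V par x k \<Longrightarrow> r_rel V par x k' \<Longrightarrow> k = k'"
proof (induction arbitrary: k' rule: r_rel.induct)
  case (leaf x)
  from leaf(2) show ?case
  proof cases
    case leaf then show ?thesis by simp
  next
    case (node y1 y2 k1 k2) then show ?thesis using leaf(1) by (simp add: is_leaf_def)
  qed
next
  case (node x y1 y2 k1 k2)
  note IH1 = node.IH(1) and IH2 = node.IH(2) and ch = node.hyps(2)
  from node.prems show ?case
  proof cases
    case leaf then show ?thesis using node.hyps(2) by (simp add: is_leaf_def)
  next
    case (node z1 z2 m1 m2)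
    have eq: "{z1, z2} = {y1, y2}" using node ch by simp
    have "(z1 = y1 \<and> z2 = y2) \<or> (z1 = y2 \<and> z2 = y1)" using eq doubleton_eq_iff by metis
    then show ?thesis
    proof
      assume "z1 = y1 \<and> z2 = y2"
      then have "m1 = k1" "m2 = k2" using node IH1 IH2 by blast+
      then show ?thesis using node(1) by simp
    next
      assume "z1 = y2 \<and> z2 = y1"
      then have "m1 = k2" "m2 = k1" using node IH1 IH2 by blast+
      then show ?thesis using node(1) by (auto simp: max.commute)
    qed
  qed
qed

lemma r_eq: assumes "r_rel V par x k" shows "r V par x = k"
  unfolding r_def
proof (rule the_equality)
  show "r_rel V par x k" by fact
  fix k' assume "r_rel V par x k'"
  then show "k' = k" using r_unique[of V par x k k'] assms by simp
qed

lemma r_rel_pos: "r_rel V par x k \<Longrightarrow> k \<ge> 1"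
  by (induction rule: r_rel.induct) auto

lemma r_pos: "full_binary_forest V par \<Longrightarrow> x \<in> V \<Longrightarrow> r V par x \<ge> 1"
proof -
  assume a: "full_binary_forest V par" "x \<in> V"
  obtain k where "r_rel V par x k" using r_exists[OF a] by blast
  then show ?thesis using r_eq[of V par x k] r_rel_pos[of V par x k] by simp
qed

lemma r_leaf: "x \<in> V \<Longrightarrow> children par V x = {} \<Longrightarrow> r V par x = 1"
  by (rule r_eq, rule r_rel.leaf) (simp add: is_leaf_def)

lemma r_node:
  assumes fb: "full_binary_forest V par" and "x \<in> V" "children par V x = {y1, y2}" "y1 \<noteq> y2"
  shows "r V par x = (if r V par y1 = r V par y2 then r V par y1 + 1 else max (r V par y1) (r V par y2))"
proof -
  have "y1 \<in> V" "y2 \<in> V" using assms(3) children_sub[of par V x] by auto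
  then obtain k1 k2 where k: "r_rel V par y1 k1" "r_rel V par y2 k2" using r_exists[OF fb] by blast
  have "r V par x = (if k1 = k2 then k1 + 1 else max k1 k2)"
    by (rule r_eq, rule r_rel.node[OF assms(2-4) k])
  then show ?thesis using r_eq[OF k(1)] r_eq[OF k(2)] by simp
qed

lemma ocp_iff:
  assumes fb: "full_binary_forest V par"
  shows "on_ocp par {x\<in>V. i < r V par x} x \<longleftrightarrow> (x \<in> V \<and> r V par x = Suc i)"
proof
  let ?S = "{x\<in>V. i < r V par x}"
  assume "on_ocp par ?S x"
  then show "x \<in> V \<and> r V par x = Suc i"
  proof (induction rule: on_ocp.induct)
    case (start x)
    then have xS: "x \<in> ?S" and ch: "children par ?S x = {}" by (auto simp: is_leaf_def)
    then have xV: "x \<in> V" by simp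
    have chV: "children par V x \<inter> ?S = {}" using ch children_S[of ?S V x] xS by auto
    from ch_cases[OF fb xV] show ?case
    proof
      assume "children par V x = {}"
      then show ?thesis using xV xS r_leaf[of x V par] by auto
    next
      assume "\<exists>y1 y2. y1 \<noteq> y2 \<and> children par V x = {y1, y2}"
      then obtain y1 y2 where y: "y1 \<noteq> y2" "children par V x = {y1, y2}" by blast
      have "y1 \<in> V" "y2 \<in> V" using y(2) children_sub[of par V x] by auto
      then have "r V par y1 \<le> i" "r V par y2 \<le> i" using chV y(2) by auto
      then show ?thesis using r_node[OF fb xV y(2) y(1)] xS xV by (auto split: if_splits)
    qed
  next
    case (step y x)
    have yS: "y \<in> ?S" using step(1) by (rule ocp_in)
    have xS: "x \<in> ?S" and py: "par y = Some x" using step(3) by (auto simp: spar_def split: option.splits if_splits)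
    then have xV: "x \<in> V" by simp
    have yc: "y \<in> children par V x" using yS xV py by (simp add: mem_children)
    from ch_cases[OF fb xV] obtain y1 y2 where y: "y1 \<noteq> y2" "children par V x = {y1, y2}"
      using yc by blast
    have nosib: "z \<notin> ?S" if "z \<in> children par V x" "z \<noteq> y" for z
    proof
      assume zS: "z \<in> ?S"
      have sz: "spar par ?S z = Some x" using that(1) xS by (auto simp: mem_children spar_def)
      have "has_sibling par ?S y" unfolding has_sibling_def
        using step(3) zS that(2) sz by (intro bexI[where x=z]) simp_all
      then show False using step(2) by simp
    qed
    have "y1 \<in> V" "y2 \<in> V" using y(2) children_sub[of par V x] by auto
    have c1: "y1 \<in> children par V x" "y2 \<in> children par V x" using y(2) by auto
    have "y = y1 \<or> y = y2" using yc y(2) by simp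
    then have "(y = y1 \<and> r V par y2 \<le> i) \<or> (y = y2 \<and> r V par y1 \<le> i)"
    proof
      assume "y = y1"
      then have "y2 \<notin> ?S" using nosib[OF c1(2)] y(1) by simp
      then show ?thesis using \<open>y = y1\<close> \<open>y2 \<in> V\<close> by simp
    next
      assume "y = y2"
      then have "y1 \<notin> ?S" using nosib[OF c1(1)] y(1) by simp
      then show ?thesis using \<open>y = y2\<close> \<open>y1 \<in> V\<close> by simp
    qed
    then show ?case using r_node[OF fb xV y(2) y(1)] step(4) xV by (auto split: if_splits)
  qed
next
  let ?S = "{x\<in>V. i < r V par x}"
  have wf: "wf {(x, y). x \<in> V \<and> par x = Some y}" using fb unfolding full_binary_forest_def forest_def by auto
  show "x \<in> V \<and> r V par x = Suc i \<Longrightarrow> on_ocp par ?S x"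
  proof (induction x rule: wf_induct[OF wf])
    case (1 x)
    then have xV: "x \<in> V" and rx: "r V par x = Suc i" by auto
    then have xS: "x \<in> ?S" by simp
    from ch_cases[OF fb xV] show ?case
    proof
      assume "children par V x = {}"
      then have "is_leaf par ?S x" using xS children_S[of ?S V x] by (auto simp: is_leaf_def)
      then show ?thesis by (rule on_ocp.start)
    next
      assume "\<exists>y1 y2. y1 \<noteq> y2 \<and> children par V x = {y1, y2}"
      then obtain y1 y2 where y: "y1 \<noteq> y2" "children par V x = {y1, y2}" by blast
      have y1c: "y1 \<in> children par V x" and y2c: "y2 \<in> children par V x" using y by auto
      have rn: "r V par x = (if r V par y1 = r V par y2 then r V par y1 + 1 else max (r V par y1) (r V par y2))"
        by (rule r_node[OF fb xV y(2) y(1)])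
      show ?thesis
      proof (cases "r V par y1 = r V par y2")
        case True
        then have "children par ?S x = {}" using rn rx y(2) xS children_S[of ?S V x] by auto
        then have "is_leaf par ?S x" using xS by (auto simp: is_leaf_def)
        then show ?thesis by (rule on_ocp.start)
      next
        case False
        have gen: "on_ocp par ?S x" if a: "a \<in> children par V x" "b \<in> children par V x" "a \<noteq> b"
          "children par V x = {a, b}" "r V par a = Suc i" "r V par b \<le> i" for a b
        proof -
          have aV: "a \<in> V" and pa: "par a = Some x" using a(1) by (auto simp: mem_children)
          have ocp: "on_ocp par ?S a" using 1(1) aV pa a(5) by auto
          have sp: "spar par ?S a = Some x" using pa xS by (simp add: spar_def)
          have ns: "\<not> has_sibling par ?S a"
          proof
            assume "has_sibling par ?S a"
            then obtain z where z: "z \<in> ?S" "z \<noteq> a" "spar par ?S z = Some x"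
              using sp unfolding has_sibling_def by auto
            then have "par z = Some x" by (auto simp: spar_def split: option.splits if_splits)
            then have "z \<in> children par V x" using z(1) xV by (simp add: mem_children)
            then have "z = b" using a(4) z(2) by auto
            then show False using z(1) a(6) by simp
          qed
          show ?thesis by (rule on_ocp.step[OF ocp ns sp])
        qed
        show ?thesis
        proof (cases "r V par y2 < r V par y1")
          case True
          then show ?thesis using gen[of y1 y2] y y1c y2c rn rx False by auto
        next
          case f2: False
          then show ?thesis using gen[of y2 y1] y y1c y2c rn rx False by (auto simp: insert_commute)
        qed
      qed
    qed
  qed
qed

lemma pruned_eq:
  assumes fb: "full_binary_forest V par"
  shows "pruned V par i = {x\<in>V. i < r V par x}"
proof (induction i)
  case 0
  then show ?case using r_pos[OF fb] by (force simp: pruned_def)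
next
  case (Suc i)
  have "pruned V par (Suc i) = prune_step par (pruned V par i)" by (simp add: pruned_def)
  also have "\<dots> = {x\<in>V. i < r V par x} - {x. x \<in> V \<and> r V par x = Suc i}"
    using Suc ocp_iff[OF fb, of i] by (simp add: prune_step_def)
  also have "\<dots> = {x\<in>V. Suc i < r V par x}" by auto
  finally show ?case .
qed

theorem lemma10:
  fixes V :: "'a set" and par :: "'a \<Rightarrow> 'a option" and x :: 'a
  assumes "full_binary_forest V par" and "x \<in> V"
  shows "x \<in> pruned V par (r V par x - 1) \<and> x \<notin> pruned V par (r V par x)"
  using pruned_eq[OF assms(1)] r_pos[OF assms] assms(2) by auto

end
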